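(* If $p$ is prime, then $f_p$ is not oblivious to $p$; that is, for every asynchronous binary transducer for $f_p$, every accessible cycle has length a multiple of $p$.
   Context: An asynchronous binary transducer is $(S,s_0,t,o)$ with $S$ finite, $s_0\in S$, $t\colon S\times\{0,1\}\to S$, $o\colon S\times\{0,1\}\to\{0,1\}^*$; $t$ and $o$ extend to words: for $s\in S$ and $\sigma_1\sigma_2\cdots$ let $s_1=s$, $s_{n+1}=t(s_n,\sigma_n)$, $t(s,\sigma_1\cdots\sigma_n)=s_{n+1}$, $o(s,\sigma_1\sigma_2\cdots)=o(s_1,\sigma_1)o(s_2,\sigma_2)\cdots$. It is a transducer for a homeomorphism $f$ of $\{0,1\}^\omega$ if $f(\psi)=o(s_0,\psi)$ for all $\psi$. A state $s$ is accessible if $s=t(s_0,\alpha)$ for some finite word $\alpha$. A cycle is a pair $(c,\gamma)$ with $c\in S$ and $\gamma$ a nonempty finite word with $t(c,\gamma)=c$; its length is $|\gamma|$; it is accessible if $c$ is. A transducer is oblivious to $p$ if it has an accessible cycle whose length is not a multiple of $p$; a rational homeomorphism is oblivious to $p$ if some transducer for it is. $f_p$ is the homeomorphism switching the digits in positions $p,2p,3p,\ldots$ of a binary sequence and leaving other digits unchanged. *)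

theory Defs
  imports "HOL-Computational_Algebra.Primes"
begin

text \<open>Binary digits are bool; finite words are bool lists; infinite binary
sequences are functions nat \<Rightarrow> bool (index 0 is the first digit).\<close>

fun trans_word :: "('s \<Rightarrow> bool \<Rightarrow> 's) \<Rightarrow> 's \<Rightarrow> bool list \<Rightarrow> 's" where
  "trans_word t s [] = s"
| "trans_word t s (a # w) = trans_word t (t s a) w"

fun out_word :: "('s \<Rightarrow> bool \<Rightarrow> 's) \<Rightarrow> ('s \<Rightarrow> bool \<Rightarrow> bool list) \<Rightarrow> 's \<Rightarrow> bool list \<Rightarrow> bool list" where
  "out_word t oo s [] = []"
| "out_word t oo s (a # w) = oo s a @ out_word t oo (t s a) w"

definition seq_prefix :: "nat \<Rightarrow> (nat \<Rightarrow> bool) \<Rightarrow> bool list" where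
  "seq_prefix n \<psi> = map \<psi> [0..<n]"

definition is_prefix_of_seq :: "bool list \<Rightarrow> (nat \<Rightarrow> bool) \<Rightarrow> bool" where
  "is_prefix_of_seq w \<phi> \<longleftrightarrow> (\<forall>i<length w. w ! i = \<phi> i)"

text \<open>(S, s0, t, o) is an asynchronous binary transducer and the infinite output
o(s0, psi) (the concatenation of the outputs along psi) equals f psi:
all finite partial outputs are prefixes of f psi and their lengths are unbounded.\<close>
definition transducer_for ::
  "'s set \<Rightarrow> 's \<Rightarrow> ('s \<Rightarrow> bool \<Rightarrow> 's) \<Rightarrow> ('s \<Rightarrow> bool \<Rightarrow> bool list) \<Rightarrow> ((nat \<Rightarrow> bool) \<Rightarrow> (nat \<Rightarrow> bool)) \<Rightarrow> bool" where
  "transducer_for S s0 t oo f \<longleftrightarrow>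
     finite S \<and> s0 \<in> S \<and> (\<forall>s\<in>S. \<forall>a. t s a \<in> S) \<and>
     (\<forall>\<psi> n. is_prefix_of_seq (out_word t oo s0 (seq_prefix n \<psi>)) (f \<psi>)) \<and>
     (\<forall>\<psi> m. \<exists>n. m \<le> length (out_word t oo s0 (seq_prefix n \<psi>)))"

definition accessible_cycle :: "'s \<Rightarrow> ('s \<Rightarrow> bool \<Rightarrow> 's) \<Rightarrow> 's \<Rightarrow> bool list \<Rightarrow> bool" where
  "accessible_cycle s0 t c \<gamma> \<longleftrightarrow>
     (\<exists>\<alpha>. trans_word t s0 \<alpha> = c) \<and> \<gamma> \<noteq> [] \<and> trans_word t c \<gamma> = c"

text \<open>f_p switches the digits in positions p, 2p, 3p, ... (1-based positions),
i.e. 0-based indices i with p dvd (i+1).\<close>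
definition f_switch :: "nat \<Rightarrow> (nat \<Rightarrow> bool) \<Rightarrow> (nat \<Rightarrow> bool)" where
  "f_switch p \<psi> = (\<lambda>i. if p dvd (i + 1) then \<not> \<psi> i else \<psi> i)"

end

theory Submission
  imports Defs
begin

definition catseq :: "bool list \<Rightarrow> (nat \<Rightarrow> bool) \<Rightarrow> nat \<Rightarrow> bool" where
  "catseq u \<beta> = (\<lambda>j. if j < length u then u ! j else \<beta> (j - length u))"

lemma trans_word_append: "trans_word t s (xs @ ys) = trans_word t (trans_word t s xs) ys"
  by (induction xs arbitrary: s) auto

lemma out_word_append:
  "out_word t oo s (xs @ ys) = out_word t oo s xs @ out_word t oo (trans_word t s xs) ys"
  by (induction xs arbitrary: s) auto

lemma seq_prefix_cat: "seq_prefix (length u + n) (catseq u \<beta>) = u @ seq_prefix n \<beta>"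
  by (rule nth_equalityI) (auto simp: seq_prefix_def catseq_def nth_append)

lemma seq_prefix_ext: "n \<le> n' \<Longrightarrow> \<exists>ys. seq_prefix n' \<beta> = seq_prefix n \<beta> @ ys"
proof -
  assume "n \<le> n'"
  then have "[0..<n'] = [0..<n] @ [n..<n']" using upt_add_eq_append[of 0 n "n'-n"] by simp
  then show ?thesis unfolding seq_prefix_def by auto
qed

lemma out_ext: "n \<le> n' \<Longrightarrow>
  \<exists>ys. out_word t oo s (seq_prefix n' \<beta>) = out_word t oo s (seq_prefix n \<beta>) @ ys"
  using seq_prefix_ext[of n n' \<beta>] out_word_append by metis

lemma tail_out:
  assumes tr: "transducer_for S s0 t oo f"
    and u: "trans_word t s0 u = c"
  shows "\<exists>n. i < length (out_word t oo c (seq_prefix n \<beta>)) \<and>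
     out_word t oo c (seq_prefix n \<beta>) ! i = f (catseq u \<beta>) (length (out_word t oo s0 u) + i)"
proof -
  define L where "L = length (out_word t oo s0 u)"
  obtain n where n: "L + i + 1 \<le> length (out_word t oo s0 (seq_prefix n (catseq u \<beta>)))"
    using tr unfolding transducer_for_def by blast
  define k where "k = max n (length u) - length u"
  have nk: "n \<le> length u + k" unfolding k_def by simp
  have eq: "out_word t oo s0 (seq_prefix (length u + k) (catseq u \<beta>))
      = out_word t oo s0 u @ out_word t oo c (seq_prefix k \<beta>)"
    using seq_prefix_cat out_word_append u by metis
  obtain ys where ys: "out_word t oo s0 (seq_prefix (length u + k) (catseq u \<beta>))
     = out_word t oo s0 (seq_prefix n (catseq u \<beta>)) @ ys"
    using out_ext[OF nk, of t oo s0 "catseq u \<beta>"] by blast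
  have len: "i < length (out_word t oo c (seq_prefix k \<beta>))"
  proof -
    have l1: "length (out_word t oo s0 (seq_prefix (length u + k) (catseq u \<beta>))) = L + length (out_word t oo c (seq_prefix k \<beta>))"
      using eq unfolding L_def by simp
    have l2: "length (out_word t oo s0 (seq_prefix n (catseq u \<beta>))) \<le> length (out_word t oo s0 (seq_prefix (length u + k) (catseq u \<beta>)))"
      using ys by simp
    show ?thesis using l1 l2 n by linarith
  qed
  have pre: "is_prefix_of_seq (out_word t oo s0 (seq_prefix (length u + k) (catseq u \<beta>))) (f (catseq u \<beta>))"
    using tr unfolding transducer_for_def by blast
  have "(out_word t oo s0 u @ out_word t oo c (seq_prefix k \<beta>)) ! (L + i) = f (catseq u \<beta>) (L + i)"
  proof -
    have "\<forall>j<length (out_word t oo s0 u @ out_word t oo c (seq_prefix k \<beta>)). (out_word t oo s0 u @ out_word t oo c (seq_prefix k \<beta>)) ! j = f (catseq u \<beta>) j"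
      using pre unfolding eq is_prefix_of_seq_def .
    moreover have "L + i < length (out_word t oo s0 u @ out_word t oo c (seq_prefix k \<beta>))"
      using len unfolding L_def by simp
    ultimately show ?thesis by blast
  qed
  then show ?thesis using len unfolding L_def by (auto simp: nth_append)
qed

lemma tail_agree:
  assumes tr: "transducer_for S s0 t oo f"
    and u0: "trans_word t s0 u0 = c" and u1: "trans_word t s0 u1 = c"
  shows "f (catseq u0 \<beta>) (length (out_word t oo s0 u0) + i)
       = f (catseq u1 \<beta>) (length (out_word t oo s0 u1) + i)"
proof -
  obtain n0 where n0: "i < length (out_word t oo c (seq_prefix n0 \<beta>))"
     "out_word t oo c (seq_prefix n0 \<beta>) ! i = f (catseq u0 \<beta>) (length (out_word t oo s0 u0) + i)"
    using tail_out[OF tr u0] by blast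
  obtain n1 where n1: "i < length (out_word t oo c (seq_prefix n1 \<beta>))"
     "out_word t oo c (seq_prefix n1 \<beta>) ! i = f (catseq u1 \<beta>) (length (out_word t oo s0 u1) + i)"
    using tail_out[OF tr u1] by blast
  obtain y0 where y0: "out_word t oo c (seq_prefix (max n0 n1) \<beta>) = out_word t oo c (seq_prefix n0 \<beta>) @ y0"
    using out_ext[of n0 "max n0 n1"] by fastforce
  obtain y1 where y1: "out_word t oo c (seq_prefix (max n0 n1) \<beta>) = out_word t oo c (seq_prefix n1 \<beta>) @ y1"
    using out_ext[of n1 "max n0 n1"] by fastforce
  have "out_word t oo c (seq_prefix (max n0 n1) \<beta>) ! i = out_word t oo c (seq_prefix n0 \<beta>) ! i"
    using y0 n0(1) by (simp add: nth_append)
  moreover have "out_word t oo c (seq_prefix (max n0 n1) \<beta>) ! i = out_word t oo c (seq_prefix n1 \<beta>) ! i"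
    using y1 n1(1) by (simp add: nth_append)
  ultimately show ?thesis using n0 n1 by simp
qed

theorem lemma3p3:
  fixes p :: nat and S :: "'s set" and s0 :: 's
    and t :: "'s \<Rightarrow> bool \<Rightarrow> 's" and oo :: "'s \<Rightarrow> bool \<Rightarrow> bool list"
  assumes "prime p"
    and "transducer_for S s0 t oo (f_switch p)"
  shows "\<forall>c \<gamma>. accessible_cycle s0 t c \<gamma> \<longrightarrow> p dvd length \<gamma>"
proof (intro allI impI)
  fix c \<gamma> assume ac: "accessible_cycle s0 t c \<gamma>"
  then obtain \<alpha> where a: "trans_word t s0 \<alpha> = c" and cyc: "trans_word t c \<gamma> = c"
    unfolding accessible_cycle_def by blast
  have p0: "p > 0" using assms(1) prime_gt_0_nat by blast
  define u0 where "u0 = \<alpha>"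
  define u1 where "u1 = \<alpha> @ \<gamma>"
  have tu0: "trans_word t s0 u0 = c" using a u0_def by simp
  have tu1: "trans_word t s0 u1 = c" using a cyc u1_def by (simp add: trans_word_append)
  define g where "g = length \<gamma>"
  define N0 where "N0 = length u0"
  define N1 where "N1 = length u1"
  have N1: "N1 = N0 + g" unfolding N1_def N0_def u1_def u0_def g_def by simp
  define L0 where "L0 = length (out_word t oo s0 u0)"
  define L1 where "L1 = length (out_word t oo s0 u1)"
  have H: "\<And>\<beta> i. f_switch p (catseq u0 \<beta>) (L0 + i) = f_switch p (catseq u1 \<beta>) (L1 + i)"
    using tail_agree[OF assms(2) tu0 tu1] unfolding L0_def L1_def by blast
  have key: "L0 + i - N0 = L1 + i - N1 \<and> ((p dvd (L0+i+1)) = (p dvd (L1+i+1)))" if i: "N1 \<le> i" for i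
  proof -
    define a where "a = L0 + i - N0"
    define b where "b = L1 + i - N1"
    have e: "(if p dvd (L0+i+1) then \<not> \<beta> a else \<beta> a) = (if p dvd (L1+i+1) then \<not> \<beta> b else \<beta> b)" for \<beta>
      using H[of \<beta> i] i N1 unfolding f_switch_def catseq_def a_def b_def N0_def N1_def by auto
    have P: "(p dvd (L0+i+1)) = (p dvd (L1+i+1))" using e[of "\<lambda>_. False"] by (auto split: if_splits)
    have "a = b"
    proof (rule ccontr)
      assume "a \<noteq> b"
      then show False using e[of "\<lambda>j. j = a"] P by (auto split: if_splits)
    qed
    then show ?thesis using P a_def b_def by simp
  qed
  have "L0 + N1 - N0 = L1" using key[of N1] by simp
  then have L1: "L1 = L0 + g" using N1 by simp
  define i where "i = p * (N1 + L0 + 1) - L0 - 1"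
  have ge: "p * (N1 + L0 + 1) \<ge> N1 + L0 + 1" using mult_le_mono1[of 1 p "N1 + L0 + 1"] p0 by simp
  have i1: "N1 \<le> i" using ge unfolding i_def by linarith
  have i2: "L0 + i + 1 = p * (N1 + L0 + 1)" using ge unfolding i_def by linarith
  have "p dvd (L1 + i + 1)" using key[OF i1] i2 by simp
  then have "p dvd (p * (N1 + L0 + 1) + g)" using i2 L1 by (metis add.commute add.left_commute)
  then show "p dvd length \<gamma>" unfolding g_def by (simp add: dvd_add_right_iff)
qed

end
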